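(* Let $r\ge 3$ be an integer and let $G$ be an $r$-regular graph of order $n$ with girth at least six. Then $\gamma_{rdR}(G)\le 2(n-r^2)+1$.
   Context: All graphs are finite and simple. An RDRD function of $G$ is a function $f:V(G)\to\{0,1,2,3\}$ such that every vertex with value $0$ has at least two neighbors with value $2$ or at least one neighbor with value $3$, every vertex with value $1$ has a neighbor with value $2$ or $3$, and the subgraph induced by the vertices with value $0$ has no isolated vertices; $\gamma_{rdR}(G)$ is the minimum of $\sum_v f(v)$ over RDRD functions. *)

theory Defs
  imports Main
begin

definition simple_graph :: "'a set \<Rightarrow> ('a \<Rightarrow> 'a \<Rightarrow> bool) \<Rightarrow> bool" where
  "simple_graph V E \<longleftrightarrow> finite V \<and> (\<forall>u v. E u v \<longrightarrow> u \<in> V \<and> v \<in> V)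
     \<and> (\<forall>u v. E u v \<longrightarrow> E v u) \<and> (\<forall>v. \<not> E v v)"

definition neighbors :: "'a set \<Rightarrow> ('a \<Rightarrow> 'a \<Rightarrow> bool) \<Rightarrow> 'a \<Rightarrow> 'a set" where
  "neighbors V E v = {u \<in> V. E v u}"

definition regular :: "'a set \<Rightarrow> ('a \<Rightarrow> 'a \<Rightarrow> bool) \<Rightarrow> nat \<Rightarrow> bool" where
  "regular V E r \<longleftrightarrow> (\<forall>v\<in>V. card (neighbors V E v) = r)"

definition is_cycle :: "'a set \<Rightarrow> ('a \<Rightarrow> 'a \<Rightarrow> bool) \<Rightarrow> 'a list \<Rightarrow> bool" where
  "is_cycle V E cs \<longleftrightarrow> length cs \<ge> 3 \<and> distinct cs \<and> set cs \<subseteq> V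
     \<and> (\<forall>i < length cs. E (cs ! i) (cs ! ((i + 1) mod length cs)))"

definition girth_at_least :: "'a set \<Rightarrow> ('a \<Rightarrow> 'a \<Rightarrow> bool) \<Rightarrow> nat \<Rightarrow> bool" where
  "girth_at_least V E g \<longleftrightarrow> (\<forall>cs. is_cycle V E cs \<longrightarrow> length cs \<ge> g)"

definition rdrd_function :: "'a set \<Rightarrow> ('a \<Rightarrow> 'a \<Rightarrow> bool) \<Rightarrow> ('a \<Rightarrow> nat) \<Rightarrow> bool" where
  "rdrd_function V E f \<longleftrightarrow>
     (\<forall>v\<in>V. f v \<le> 3)
   \<and> (\<forall>v\<in>V. f v = 0 \<longrightarrow>
        card {u \<in> neighbors V E v. f u = 2} \<ge> 2 \<or> (\<exists>u\<in>neighbors V E v. f u = 3))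
   \<and> (\<forall>v\<in>V. f v = 1 \<longrightarrow> (\<exists>u\<in>neighbors V E v. f u = 2 \<or> f u = 3))
   \<and> (\<forall>v\<in>V. f v = 0 \<longrightarrow> (\<exists>u\<in>neighbors V E v. f u = 0))"

definition gamma_rdR :: "'a set \<Rightarrow> ('a \<Rightarrow> 'a \<Rightarrow> bool) \<Rightarrow> nat" where
  "gamma_rdR V E = Min {(\<Sum>v\<in>V. f v) | f. rdrd_function V E f}"

end

theory Submission
  imports Defs
begin

lemma lt3: "(i::nat) < 3 \<Longrightarrow> i = 0 \<or> i = 1 \<or> i = 2" by auto
lemma lt4: "(i::nat) < 4 \<Longrightarrow> i = 0 \<or> i = 1 \<or> i = 2 \<or> i = 3" by auto
lemma lt5: "(i::nat) < 5 \<Longrightarrow> i = 0 \<or> i = 1 \<or> i = 2 \<or> i = 3 \<or> i = 4" by auto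

lemma no_tri:
  assumes g: "girth_at_least V E 6" and s: "simple_graph V E"
    and "E a b" "E b c" "E c a"
  shows False
proof -
  have "is_cycle V E [a,b,c]"
    unfolding is_cycle_def using assms s unfolding simple_graph_def
    by (auto simp: less_Suc_eq)
  with g show False unfolding girth_at_least_def by fastforce
qed

lemma no_quad:
  assumes g: "girth_at_least V E 6" and s: "simple_graph V E"
    and "E a b" "E b c" "E c d" "E d a" "a \<noteq> c" "b \<noteq> d"
  shows False
proof -
  have "is_cycle V E [a,b,c,d]"
    unfolding is_cycle_def using assms s unfolding simple_graph_def
    by (auto simp: less_Suc_eq)
  with g show False unfolding girth_at_least_def by fastforce
qed

lemma no_pent:
  assumes g: "girth_at_least V E 6" and s: "simple_graph V E"
    and "E a b" "E b c" "E c d" "E d e" "E e a"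
    and "distinct [a,b,c,d,e]"
  shows False
proof -
  have "is_cycle V E [a,b,c,d,e]"
    unfolding is_cycle_def using assms s unfolding simple_graph_def
    by (auto simp: less_Suc_eq)
  with g show False unfolding girth_at_least_def by fastforce
qed

theorem proposition2p6:
  fixes V :: "'a set" and E :: "'a \<Rightarrow> 'a \<Rightarrow> bool" and r n :: nat
  assumes "simple_graph V E"
    and "V \<noteq> {}"
    and "r \<ge> 3"
    and "regular V E r"
    and "card V = n"
    and "girth_at_least V E 6"
  shows "int (gamma_rdR V E) \<le> 2 * (int n - int r ^ 2) + 1"
proof -
  note s = assms(1) and g = assms(6)
  have fin: "finite V" and EV: "\<And>u w. E u w \<Longrightarrow> u \<in> V \<and> w \<in> V"
    and sym: "\<And>u w. E u w \<Longrightarrow> E w u" and irr: "\<And>w. \<not> E w w"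
    using s unfolding simple_graph_def by auto
  obtain v where vV: "v \<in> V" using assms(2) by auto
  define nb where "nb = neighbors V E"
  have nbI: "\<And>x y. x \<in> nb y \<longleftrightarrow> x \<in> V \<and> E y x" unfolding nb_def neighbors_def by auto
  have nbfin: "\<And>x. finite (nb x)" unfolding nb_def neighbors_def using fin by auto
  have nbcard: "\<And>x. x \<in> V \<Longrightarrow> card (nb x) = r" using assms(4) unfolding nb_def regular_def by auto
  define N where "N = nb v"
  define C where "C = (\<lambda>u. nb u - {v})"
  define Z where "Z = N \<union> (\<Union>u\<in>N. C u)"
  define B where "B = insert v Z"
  have NV: "N \<subseteq> V" unfolding N_def using nbI by auto
  have cardN: "card N = r" unfolding N_def using nbcard vV by auto
  have finN: "finite N" unfolding N_def using nbfin by auto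
  have cardC: "\<And>u. u \<in> N \<Longrightarrow> card (C u) = r - 1"
  proof -
    fix u assume u: "u \<in> N"
    then have "v \<in> nb u" "u \<in> V" unfolding N_def using nbI sym vV by auto
    then show "card (C u) = r - 1" unfolding C_def using nbcard nbfin by (simp add: card_Diff_singleton)
  qed
  have finC: "\<And>u. finite (C u)" unfolding C_def using nbfin by auto
  have CN: "\<And>u x. u \<in> N \<Longrightarrow> x \<in> C u \<Longrightarrow> x \<notin> N"
  proof
    fix u x assume "u \<in> N" "x \<in> C u" "x \<in> N"
    then have "E v u" "E u x" "E v x" unfolding N_def C_def using nbI by auto
    then show False using no_tri[OF g s, of v u x] sym by auto
  qed
  have Cdisj: "\<And>u w. u \<in> N \<Longrightarrow> w \<in> N \<Longrightarrow> u \<noteq> w \<Longrightarrow> C u \<inter> C w = {}"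
  proof (rule ccontr)
    fix u w assume "u \<in> N" "w \<in> N" "u \<noteq> w" "C u \<inter> C w \<noteq> {}"
    then obtain x where "x \<in> C u" "x \<in> C w" "E v u" "E v w" by (auto simp: N_def nbI)
    then have "E u x" "E w x" "x \<noteq> v" unfolding C_def using nbI by auto
    then show False using no_quad[OF g s, of v u x w] sym \<open>E v u\<close> \<open>E v w\<close> \<open>u \<noteq> w\<close> by auto
  qed
  have cardU: "card (\<Union>u\<in>N. C u) = r * (r - 1)"
    using card_UN_disjoint[OF finN, of C] finC Cdisj cardN cardC by simp
  have NU: "N \<inter> (\<Union>u\<in>N. C u) = {}" using CN by auto
  have finU: "finite (\<Union>u\<in>N. C u)" using finN finC by auto
  have cardZ: "card Z = r + r * (r - 1)"
    unfolding Z_def using card_Un_disjoint[OF finN finU NU] cardN cardU by simp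
  have vZ: "v \<notin> Z" unfolding Z_def C_def N_def using nbI irr by auto
  have finZ: "finite Z" unfolding Z_def using finN finU by auto
  have cardB: "card B = 1 + r ^ 2"
  proof -
    have "card B = 1 + r + r * (r - 1)" unfolding B_def using cardZ vZ finZ by simp
    also have "\<dots> = 1 + r ^ 2" using assms(3) by (cases r) (auto simp: power2_eq_square)
    finally show ?thesis .
  qed
  have ZV: "Z \<subseteq> V" unfolding Z_def C_def N_def using nbI by auto
  have BV: "B \<subseteq> V" unfolding B_def using ZV vV by auto
  define f where "f = (\<lambda>x. if x = v then 3 else if x \<in> Z then 0 else (2::nat))"
  have rd: "rdrd_function V E f"
    unfolding rdrd_function_def
  proof (intro conjI ballI impI)
    fix x assume "x \<in> V" show "f x \<le> 3" unfolding f_def by auto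
  next
    fix x assume "x \<in> V" "f x = 1" then show "\<exists>u\<in>neighbors V E x. f u = 2 \<or> f u = 3"
      unfolding f_def by (auto split: if_splits)
  next
    fix x assume xV: "x \<in> V" and fx: "f x = 0"
    then have xZ: "x \<in> Z" and xv: "x \<noteq> v" unfolding f_def by (auto split: if_splits)
    show "\<exists>u\<in>neighbors V E x. f u = 0"
    proof (cases "x \<in> N")
      case True
      have "card (C x) = r - 1" using cardC True .
      then have "C x \<noteq> {}" using assms(3) by auto
      then obtain y where y: "y \<in> C x" by auto
      then have "y \<in> Z" "y \<noteq> v" "y \<in> nb x" unfolding Z_def C_def using True by auto
      then show ?thesis unfolding f_def nb_def by auto
    next
      case False
      then obtain u where u: "u \<in> N" "x \<in> C u" using xZ unfolding Z_def by auto
      then have "u \<in> nb x" "u \<in> Z" "u \<noteq> v" unfolding C_def N_def Z_def using nbI sym irr by auto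
      then show ?thesis unfolding f_def nb_def by auto
    qed
  next
    fix x assume xV: "x \<in> V" and fx: "f x = 0"
    then have xZ: "x \<in> Z" and xv: "x \<noteq> v" unfolding f_def by (auto split: if_splits)
    show "2 \<le> card {u \<in> neighbors V E x. f u = 2} \<or> (\<exists>u\<in>neighbors V E x. f u = 3)"
    proof (cases "x \<in> N")
      case True
      then have "v \<in> neighbors V E x" using vV sym unfolding N_def nbI nb_def neighbors_def by auto
      then show ?thesis unfolding f_def by auto
    next
      case False
      then obtain u where u: "u \<in> N" "x \<in> C u" using xZ unfolding Z_def by auto
      have Evu: "E v u" and Eux: "E u x" using u unfolding N_def C_def using nbI by auto
      have sub: "nb x - {u} \<subseteq> {y \<in> neighbors V E x. f y = 2}"
      proof
        fix y assume y: "y \<in> nb x - {u}"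
        then have Exy: "E x y" and yu: "y \<noteq> u" and yV: "y \<in> V" using nbI by auto
        have yv: "y \<noteq> v" using Exy False sym vV unfolding N_def nbI using xV by auto
        have yN: "y \<notin> N"
        proof
          assume "y \<in> N" then have "E v y" unfolding N_def using nbI by auto
          then show False using no_quad[OF g s, of v y x u] Exy Eux Evu yu xv sym by auto
        qed
        have yC: "\<And>w. w \<in> N \<Longrightarrow> y \<notin> C w"
        proof
          fix w assume w: "w \<in> N" "y \<in> C w"
          then have Evw: "E v w" and Ewy: "E w y" unfolding N_def C_def using nbI by auto
          show False
          proof (cases "w = u")
            case True then show False using no_tri[OF g s, of u x y] Eux Exy Ewy sym by auto
          next
            case wu: False
            have "x \<noteq> w" using False w by auto
            then show False using no_pent[OF g s, of v u x y w] Evu Eux Exy Ewy Evw sym irr wu yu yv xv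
              by (metis distinct_length_2_or_more distinct_singleton list.set_intros(1) set_ConsD)
          qed
        qed
        have "y \<notin> Z" unfolding Z_def using yN yC by auto
        then show "y \<in> {y \<in> neighbors V E x. f y = 2}"
          unfolding f_def neighbors_def using yV Exy yv by auto
      qed
      have "u \<in> nb x" using Eux sym EV using nbI by blast
      then have "card (nb x - {u}) = r - 1" using nbcard xV nbfin by (simp add: card_Diff_singleton)
      moreover have "finite {y \<in> neighbors V E x. f y = 2}" unfolding neighbors_def using fin by auto
      ultimately have "r - 1 \<le> card {y \<in> neighbors V E x. f y = 2}" using card_mono sub by metis
      then show ?thesis using assms(3) by auto
    qed
  qed
  have sumf: "(\<Sum>x\<in>V. f x) = 3 + 2 * card (V - B)"
  proof -
    have finB: "finite B" using BV fin finite_subset by auto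
    have "(\<Sum>x\<in>V. f x) = (\<Sum>x\<in>B. f x) + (\<Sum>x\<in>V - B. f x)"
      using sum.subset_diff[OF BV fin] by (simp add: add.commute)
    moreover have "(\<Sum>x\<in>B. f x) = 3"
    proof -
      have "(\<Sum>x\<in>B. f x) = f v + (\<Sum>x\<in>Z. f x)" unfolding B_def using finZ vZ by simp
      moreover have "(\<Sum>x\<in>Z. f x) = 0" using vZ unfolding f_def by (auto intro!: sum.neutral)
      ultimately show ?thesis unfolding f_def by simp
    qed
    moreover have "(\<Sum>x\<in>V - B. f x) = (\<Sum>x\<in>V - B. 2)"
      by (rule sum.cong) (auto simp: f_def B_def)
    ultimately show ?thesis by simp
  qed
  have cVB: "card (V - B) = n - (1 + r ^ 2)"
    using card_Diff_subset[OF finite_subset[OF BV fin] BV] cardB assms(5) by simp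
  have nge: "1 + r ^ 2 \<le> n" using card_mono[OF fin BV] cardB assms(5) by simp
  let ?S = "{(\<Sum>v\<in>V. f v) | f. rdrd_function V E f}"
  have Sfin: "finite ?S"
  proof (rule finite_subset)
    show "?S \<subseteq> {..3 * card V}"
    proof
      fix k assume "k \<in> ?S"
      then obtain h where k: "k = (\<Sum>v\<in>V. h v)" "rdrd_function V E h" by auto
      then have "\<forall>x\<in>V. h x \<le> 3" unfolding rdrd_function_def by auto
      then have "(\<Sum>v\<in>V. h v) \<le> (\<Sum>v\<in>V. 3)" by (intro sum_mono) auto
      then show "k \<in> {..3 * card V}" using k by auto
    qed
  qed auto
  have "gamma_rdR V E \<le> (\<Sum>x\<in>V. f x)"
    unfolding gamma_rdR_def using rd by (intro Min_le[OF Sfin]) auto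
  then have "gamma_rdR V E \<le> 3 + 2 * (n - (1 + r ^ 2))" using sumf cVB by simp
  then have "int (gamma_rdR V E) \<le> int (3 + 2 * (n - (1 + r ^ 2)))" by linarith
  also have "\<dots> = 3 + 2 * (int n - (1 + int r ^ 2))" using nge by (simp add: of_nat_diff)
  finally show ?thesis by simp
qed

end
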